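(* For every $N\ge1$ and every $f\in H_N^{\mathrm{sip}}$ one has $\mathcal E_N(f)\ge\mathcal R_N(f)$, where $\mathcal E_N$ and $\mathcal R_N$ are the Dirichlet forms described in the context.
   Context: Fix $\gamma>0$ and $p:\mathbb R\to[0,\infty)$ symmetric, finite range $R$, $p(0)=0$. $p_N(r)=p(Nr)$, $A_N=\frac1N\{-R,\dots,R\}\setminus\{0\}$, $A_N^+=\{|r|:r\in A_N\}$. $\mu_N$ gives mass $\frac1N$ to each point of $\frac1N\mathbb Z$, $\nu_{\gamma,N}=\mu_N+\sqrt2\gamma\delta_0$, $H_N^{\mathrm{sip}}=L^2(\frac1N\mathbb Z,\nu_{\gamma,N})$. $\mathcal E_N(f)=-\sum_{w\in\frac1N\mathbb Z}f(w)\sum_{r\in A_N}2p_N(r)\big(\frac{N^2}2+\frac{N^3\gamma}{\sqrt2}\mathbf 1_{\{r=-w\}}\big)(f(w+r)-f(w))\,\nu_{\gamma,N}(w)$ (the Dirichlet form of the rescaled SIP difference process). $\mathcal R_N(f)=-\sum_{v\in\frac1N\mathbb Z}f(v)\,\Delta_Nf(v)\,\mu_N(v)$ with $\Delta_Ng(v)=N^2\sum_{r\in A_N^+}p_N(r)[g(v+r)-2g(v)+g(v-r)]$ (the Dirichlet form of the diffusively rescaled random walk). *)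

theory Defs
  imports "HOL-Analysis.Analysis"
begin

definition lattice :: "nat \<Rightarrow> real set" where
  "lattice N = {real_of_int k / real N | k. True}"

definition mu_N :: "nat \<Rightarrow> real \<Rightarrow> real" where
  "mu_N N w = 1 / real N"

definition nu_N :: "real \<Rightarrow> nat \<Rightarrow> real \<Rightarrow> real" where
  "nu_N \<gamma> N w = mu_N N w + (if w = 0 then sqrt 2 * \<gamma> else 0)"

definition p_N :: "(real \<Rightarrow> real) \<Rightarrow> nat \<Rightarrow> real \<Rightarrow> real" where
  "p_N p N r = p (real N * r)"

definition A_N :: "nat \<Rightarrow> nat \<Rightarrow> real set" where
  "A_N R N = {real_of_int j / real N | j. j \<in> {- int R .. int R} \<and> j \<noteq> 0}"

definition A_N_plus :: "nat \<Rightarrow> nat \<Rightarrow> real set" where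
  "A_N_plus R N = abs ` A_N R N"

text \<open>Membership in H_N^sip = L^2((1/N)Z, nu_{gamma,N}).\<close>
definition in_H_sip :: "real \<Rightarrow> nat \<Rightarrow> (real \<Rightarrow> real) \<Rightarrow> bool" where
  "in_H_sip \<gamma> N f \<longleftrightarrow> (\<lambda>w. (f w)\<^sup>2 * nu_N \<gamma> N w) summable_on lattice N"

text \<open>Dirichlet form of the rescaled SIP difference process.\<close>
definition E_N :: "(real \<Rightarrow> real) \<Rightarrow> nat \<Rightarrow> real \<Rightarrow> nat \<Rightarrow> (real \<Rightarrow> real) \<Rightarrow> real" where
  "E_N p R \<gamma> N f = - (\<Sum>\<^sub>\<infinity>w\<in>lattice N.
      f w * (\<Sum>r\<in>A_N R N. 2 * p_N p N r *
        ((real N)\<^sup>2 / 2 + (real N)^3 * \<gamma> / sqrt 2 * (if r = - w then 1 else 0)) *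
        (f (w + r) - f w)) * nu_N \<gamma> N w)"

definition Delta_N :: "(real \<Rightarrow> real) \<Rightarrow> nat \<Rightarrow> nat \<Rightarrow> (real \<Rightarrow> real) \<Rightarrow> real \<Rightarrow> real" where
  "Delta_N p R N g v = (real N)\<^sup>2 * (\<Sum>r\<in>A_N_plus R N. p_N p N r * (g (v + r) - 2 * g v + g (v - r)))"

text \<open>Dirichlet form of the diffusively rescaled random walk.\<close>
definition R_N :: "(real \<Rightarrow> real) \<Rightarrow> nat \<Rightarrow> nat \<Rightarrow> (real \<Rightarrow> real) \<Rightarrow> real" where
  "R_N p R N f = - (\<Sum>\<^sub>\<infinity>v\<in>lattice N. f v * Delta_N p R N f v * mu_N N v)"

end

theory Submission
  imports Defs
begin

lemma infsum_le_perturb: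
  fixes e \<rho> :: "real \<Rightarrow> real"
  assumes F: "finite F" and FA: "F \<subseteq> A"
    and out: "\<And>x. x \<in> A \<Longrightarrow> x \<notin> F \<Longrightarrow> e x = \<rho> x"
    and le: "sum (\<lambda>x. e x - \<rho> x) F \<le> 0"
  shows "infsum e A \<le> infsum \<rho> A"
proof -
  define d where "d = (\<lambda>x. if x \<in> F then e x - \<rho> x else 0)"
  have dF: "d summable_on F" using F by simp
  have dsum: "d summable_on A"
  proof -
    have "d summable_on F \<longleftrightarrow> d summable_on A"
      by (rule summable_on_cong_neutral) (use FA in \<open>auto simp: d_def\<close>)
    with dF show ?thesis by simp
  qed
  have mdF: "(\<lambda>x. - d x) summable_on F" using F by simp
  have mdsum: "(\<lambda>x. - d x) summable_on A"
  proof -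
    have "(\<lambda>x. - d x) summable_on F \<longleftrightarrow> (\<lambda>x. - d x) summable_on A"
      by (rule summable_on_cong_neutral) (use FA in \<open>auto simp: d_def\<close>)
    with mdF show ?thesis by simp
  qed
  have dinf: "infsum d A = sum (\<lambda>x. e x - \<rho> x) F"
  proof -
    have "infsum d A = infsum d F"
      by (rule infsum_cong_neutral) (use FA in \<open>auto simp: d_def\<close>)
    also have "\<dots> = sum d F" using F by simp
    also have "\<dots> = sum (\<lambda>x. e x - \<rho> x) F" by (rule sum.cong) (auto simp: d_def)
    finally show ?thesis .
  qed
  have eq: "\<And>x. x \<in> A \<Longrightarrow> e x = \<rho> x + d x"
    using out by (auto simp: d_def)
  show ?thesis
  proof (cases "\<rho> summable_on A")
    case True
    have "infsum e A = infsum (\<lambda>x. \<rho> x + d x) A" by (rule infsum_cong) (simp add: eq)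
    also have "\<dots> = infsum \<rho> A + infsum d A" by (rule infsum_add[OF True dsum])
    finally show ?thesis using dinf le by simp
  next
    case False
    have "\<not> e summable_on A"
    proof
      assume "e summable_on A"
      then have s: "(\<lambda>x. e x + - d x) summable_on A" using mdsum by (rule summable_on_add)
      have "(\<lambda>x. e x + - d x) summable_on A \<longleftrightarrow> \<rho> summable_on A"
        by (rule summable_on_cong) (use eq in simp)
      with s False show False by simp
    qed
    then show ?thesis using False by (simp add: infsum_not_exists)
  qed
qed

lemma A_N_eq: "A_N R N = (\<lambda>j. real_of_int j / real N) ` ({- int R .. int R} - {0})"
  by (auto simp: A_N_def)

lemma A_N_finite: "finite (A_N R N)"
  unfolding A_N_eq by simp

lemma A_N_nz: "N \<ge> 1 \<Longrightarrow> r \<in> A_N R N \<Longrightarrow> r \<noteq> 0"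
  by (auto simp: A_N_def)

lemma A_N_neg: "r \<in> A_N R N \<Longrightarrow> - r \<in> A_N R N"
  unfolding A_N_def
  by clarsimp (rule_tac x="- j" in exI, auto)

lemma A_N_lat: "A_N R N \<subseteq> lattice N"
  by (auto simp: A_N_def lattice_def)

lemma zero_lat: "0 \<in> lattice N"
  unfolding lattice_def by (rule CollectI, rule exI[of _ 0]) simp

lemma Aplus_eq: "N \<ge> 1 \<Longrightarrow> A_N_plus R N = {r \<in> A_N R N. r > 0}"
proof safe
  fix r assume N: "N \<ge> 1" and r: "r \<in> A_N_plus R N"
  then obtain s where s: "s \<in> A_N R N" "r = \<bar>s\<bar>" by (auto simp: A_N_plus_def)
  show "r \<in> A_N R N"
  proof (cases "s \<ge> 0")
    case True then show ?thesis using s by simp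
  next
    case False then show ?thesis using s A_N_neg[of s] by simp
  qed
  show "r > 0" using s A_N_nz[OF N s(1)] by simp
next
  fix r assume "N \<ge> 1" "r \<in> A_N R N" "r > 0"
  then show "r \<in> A_N_plus R N" unfolding A_N_plus_def by (metis abs_of_pos image_eqI)
qed

lemma sum_split:
  assumes N: "N \<ge> 1"
  shows "(\<Sum>r\<in>A_N R N. g r) = (\<Sum>r\<in>A_N_plus R N. g r + g (- r))"
proof -
  let ?A = "A_N R N"
  have un: "?A = {r \<in> ?A. r > 0} \<union> {r \<in> ?A. r < 0}"
    using A_N_nz[OF N] by force
  have neg: "{r \<in> ?A. r < 0} = uminus ` {r \<in> ?A. r > 0}"
  proof safe
    fix r assume "r \<in> ?A" "r < 0"
    then show "r \<in> uminus ` {r \<in> ?A. r > 0}"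
      by (intro image_eqI[of _ _ "- r"]) (auto intro: A_N_neg)
  qed (auto intro: A_N_neg)
  have "(\<Sum>r\<in>?A. g r) = (\<Sum>r\<in>{r \<in> ?A. r > 0}. g r) + (\<Sum>r\<in>{r \<in> ?A. r < 0}. g r)"
    by (subst un, rule sum.union_disjoint) (use A_N_finite[of R N] in auto)
  also have "(\<Sum>r\<in>{r \<in> ?A. r < 0}. g r) = (\<Sum>r\<in>{r \<in> ?A. r > 0}. g (- r))"
    unfolding neg by (subst sum.reindex) (auto simp: inj_on_def)
  finally show ?thesis using Aplus_eq[OF N] by (simp add: sum.distrib)
qed

lemma Delta_eq:
  assumes N: "N \<ge> 1" and p_sym: "\<And>x. p (- x) = p x"
  shows "Delta_N p R N f w = (real N)\<^sup>2 * (\<Sum>r\<in>A_N R N. p_N p N r * (f (w + r) - f w))"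
proof -
  have "(\<Sum>r\<in>A_N R N. p_N p N r * (f (w + r) - f w))
      = (\<Sum>r\<in>A_N_plus R N. p_N p N r * (f (w + r) - f w) + p_N p N (- r) * (f (w + - r) - f w))"
    by (rule sum_split[OF N])
  also have "\<dots> = (\<Sum>r\<in>A_N_plus R N. p_N p N r * (f (w + r) - 2 * f w + f (w - r)))"
  proof (rule sum.cong)
    fix r
    have "p_N p N (- r) = p_N p N r" unfolding p_N_def using p_sym[of "real N * r"] by simp
    then show "p_N p N r * (f (w + r) - f w) + p_N p N (- r) * (f (w + - r) - f w)
        = p_N p N r * (f (w + r) - 2 * f w + f (w - r))" by (simp add: algebra_simps)
  qed simp
  finally show ?thesis unfolding Delta_N_def by simp
qed

theorem proposition5p6:
  fixes p :: "real \<Rightarrow> real" and R :: nat and \<gamma> :: real and N :: nat and f :: "real \<Rightarrow> real"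
  assumes gamma_pos: "\<gamma> > 0"
    and p_nonneg: "\<And>x. p x \<ge> 0"
    and p_sym: "\<And>x. p (- x) = p x"
    and p_range: "\<And>x. \<bar>x\<bar> > real R \<Longrightarrow> p x = 0"
    and p_zero: "p 0 = 0"
    and N_pos: "N \<ge> 1"
    and f_H: "in_H_sip \<gamma> N f"
  shows "E_N p R \<gamma> N f \<ge> R_N p R N f"
proof -
  let ?A = "A_N R N"
  let ?q = "p_N p N"
  define S where "S w = (\<Sum>r\<in>?A. ?q r * (f (w + r) - f w))" for w
  define c where "c = sqrt 2 * \<gamma>"
  define e where "e w = f w * (\<Sum>r\<in>?A. 2 * ?q r *
        ((real N)\<^sup>2 / 2 + (real N)^3 * \<gamma> / sqrt 2 * (if r = - w then 1 else 0)) *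
        (f (w + r) - f w)) * nu_N \<gamma> N w" for w
  define \<rho> where "\<rho> w = f w * Delta_N p R N f w * mu_N N w" for w
  have Npos: "real N > 0" using N_pos by simp
  have qsym: "?q (- r) = ?q r" for r unfolding p_N_def using p_sym[of "real N * r"] by simp
  have inner: "(\<Sum>r\<in>?A. 2 * ?q r *
        ((real N)\<^sup>2 / 2 + (real N)^3 * \<gamma> / sqrt 2 * (if r = - w then 1 else 0)) *
        (f (w + r) - f w))
      = (real N)\<^sup>2 * S w + (if w \<in> ?A then 2 * ?q w * (real N)^3 * \<gamma> / sqrt 2 * (f 0 - f w) else 0)"
    for w
  proof -
    have "(\<Sum>r\<in>?A. 2 * ?q r *
        ((real N)\<^sup>2 / 2 + (real N)^3 * \<gamma> / sqrt 2 * (if r = - w then 1 else 0)) *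
        (f (w + r) - f w))
      = (\<Sum>r\<in>?A. (real N)\<^sup>2 * (?q r * (f (w + r) - f w)) +
           (if r = - w then 2 * ?q r * (real N)^3 * \<gamma> / sqrt 2 * (f (w + r) - f w) else 0))"
      by (rule sum.cong) (auto simp: algebra_simps)
    also have "\<dots> = (real N)\<^sup>2 * S w + (if - w \<in> ?A then 2 * ?q (- w) * (real N)^3 * \<gamma> / sqrt 2 * (f (w + - w) - f w) else 0)"
      by (simp add: sum.distrib sum_distrib_left S_def sum.delta A_N_finite)
    also have "\<dots> = (real N)\<^sup>2 * S w + (if w \<in> ?A then 2 * ?q w * (real N)^3 * \<gamma> / sqrt 2 * (f 0 - f w) else 0)"
      using A_N_neg[of w] A_N_neg[of "- w"] qsym[of w] by auto
    finally show ?thesis .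
  qed
  have rho_eq: "\<rho> w = f w * (real N)\<^sup>2 * S w / real N" for w
    unfolding \<rho>_def Delta_eq[where p=p, OF N_pos p_sym] S_def mu_N_def by simp
  have e_eq: "e w = f w * ((real N)\<^sup>2 * S w + (if w \<in> ?A then 2 * ?q w * (real N)^3 * \<gamma> / sqrt 2 * (f 0 - f w) else 0))
      * (1 / real N + (if w = 0 then c else 0))" for w
    unfolding e_def inner nu_N_def mu_N_def c_def by simp
  have A0: "0 \<notin> ?A" using A_N_nz[OF N_pos] by blast
  have key: "infsum e (lattice N) \<le> infsum \<rho> (lattice N)"
  proof (rule infsum_le_perturb[where F="insert 0 ?A"])
    show "finite (insert 0 ?A)" using A_N_finite by simp
    show "insert 0 ?A \<subseteq> lattice N" using A_N_lat zero_lat by auto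
    show "e x = \<rho> x" if "x \<in> lattice N" "x \<notin> insert 0 ?A" for x
      using that by (simp add: e_eq rho_eq)
    have d0: "e 0 - \<rho> 0 = c * (real N)\<^sup>2 * (\<Sum>r\<in>?A. ?q r * (f 0 * f r - f 0 * f 0))"
    proof -
      have "e 0 - \<rho> 0 = c * (real N)\<^sup>2 * (f 0 * S 0)"
        using A0 Npos by (simp add: e_eq rho_eq field_simps)
      also have "f 0 * S 0 = (\<Sum>r\<in>?A. ?q r * (f 0 * f r - f 0 * f 0))"
        by (simp add: S_def sum_distrib_left algebra_simps)
      finally show ?thesis .
    qed
    have d1: "e w - \<rho> w = c * (real N)\<^sup>2 * (?q w * (f w * f 0 - f w * f w))" if "w \<in> ?A" for w
    proof -
      have "w \<noteq> 0" using that A0 by auto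
      then show ?thesis using that Npos
        by (simp add: e_eq rho_eq c_def field_simps power2_eq_square power3_eq_cube)
    qed
    have "sum (\<lambda>x. e x - \<rho> x) (insert 0 ?A) = (e 0 - \<rho> 0) + sum (\<lambda>x. e x - \<rho> x) ?A"
      using A0 A_N_finite by simp
    also have "\<dots> = c * (real N)\<^sup>2 * (\<Sum>r\<in>?A. ?q r * (f 0 * f r - f 0 * f 0) + ?q r * (f r * f 0 - f r * f r))"
      by (simp add: d0 d1 sum.distrib distrib_left sum_distrib_left)
    also have "\<dots> = - (c * (real N)\<^sup>2 * (\<Sum>r\<in>?A. ?q r * (f r - f 0)\<^sup>2))"
    proof -
      have "(\<Sum>r\<in>?A. ?q r * (f 0 * f r - f 0 * f 0) + ?q r * (f r * f 0 - f r * f r))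
          = (\<Sum>r\<in>?A. - (?q r * (f r - f 0)\<^sup>2))"
        by (rule sum.cong) (auto simp: power2_eq_square algebra_simps)
      then show ?thesis by (simp add: sum_negf)
    qed
    also have "\<dots> \<le> 0"
    proof -
      have "0 \<le> (\<Sum>r\<in>?A. ?q r * (f r - f 0)\<^sup>2)"
        by (rule sum_nonneg) (simp add: p_N_def p_nonneg)
      moreover have "c \<ge> 0" using gamma_pos by (simp add: c_def)
      ultimately show ?thesis by simp
    qed
    finally show "sum (\<lambda>x. e x - \<rho> x) (insert 0 ?A) \<le> 0" .
  qed
  have E: "E_N p R \<gamma> N f = - infsum e (lattice N)"
    unfolding E_N_def by (rule arg_cong[where f=uminus], rule infsum_cong) (simp add: e_def)
  have Rr: "R_N p R N f = - infsum \<rho> (lattice N)"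
    unfolding R_N_def by (rule arg_cong[where f=uminus], rule infsum_cong) (simp add: \<rho>_def)
  show ?thesis unfolding E Rr using key by simp
qed

end
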